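(* Let $F$ be an edge-transitive graph, fix an edge $xy$ of $F$, let $F'=F\setminus xy$, and for an integer $t\ge2$ let $F'_t$ be the graph obtained from $F'[K_t]$ by adding one edge between a vertex of the copy of $K_t$ replacing $x$ and a vertex of the copy of $K_t$ replacing $y$. If $G$ is a regular $F$-saturated graph, then for every $t\ge2$ the graph $G[K_t]$ is regular and $F'_t$-oversaturated. Moreover, if $F=K_s$ for some $s\ge3$, then $G[K_t]$ is $F'_t$-saturated. In particular, for every $t\ge2$ and $F=K_s$ with $s\ge 3$, $\liminf_{n\to\infty}\frac{\mathrm{rsat}(n,F'_t)}{n^2}=0$.
   Context: All graphs are finite and simple. For graphs $G,H$, the blow-up $G[H]$ is obtained by replacing each vertex of $G$ by a copy of $H$ and, for every edge $uv$ of $G$, adding all edges between the copies corresponding to $u$ and $v$. $K_t$ is the complete graph on $t$ vertices. A graph $G$ is $F$-saturated if it contains no copy of $F$ but adding any non-edge creates a copy of $F$; $G$ is $F$-oversaturated if adding any non-edge $e$ creates a copy of $F$ containing $e$ ($G$ need not be $F$-free). $\mathrm{rsat}(n,F)$ is the smallest number of edges of a regular $n$-vertex $F$-saturated graph, the $\liminf$ being over $n$ for which it is defined. A graph is edge-transitive if its automorphism group acts transitively on its edges. *)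

theory Defs
  imports Complex_Main "HOL-Library.Liminf_Limsup" "HOL-Library.Extended_Real"
begin

type_synonym 'a graph = "'a set \<times> 'a set set"

definition verts :: "'a graph \<Rightarrow> 'a set" where "verts G = fst G"
definition edges :: "'a graph \<Rightarrow> 'a set set" where "edges G = snd G"

definition wf_graph :: "'a graph \<Rightarrow> bool" where
  "wf_graph G \<longleftrightarrow> finite (verts G) \<and>
     (\<forall>e\<in>edges G. \<exists>u v. e = {u, v} \<and> u \<noteq> v \<and> u \<in> verts G \<and> v \<in> verts G)"

definition adj :: "'a graph \<Rightarrow> 'a \<Rightarrow> 'a \<Rightarrow> bool" where
  "adj G u v \<longleftrightarrow> u \<noteq> v \<and> {u, v} \<in> edges G"

definition degree :: "'a graph \<Rightarrow> 'a \<Rightarrow> nat" where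
  "degree G v = card {u \<in> verts G. adj G v u}"

definition regular :: "'a graph \<Rightarrow> bool" where
  "regular G \<longleftrightarrow> (\<exists>d. \<forall>v\<in>verts G. degree G v = d)"

definition nonedges :: "'a graph \<Rightarrow> 'a set set" where
  "nonedges G = {{u, v} | u v. u \<in> verts G \<and> v \<in> verts G \<and> u \<noteq> v \<and> {u, v} \<notin> edges G}"

definition add_edge :: "'a graph \<Rightarrow> 'a set \<Rightarrow> 'a graph" where
  "add_edge G e = (verts G, insert e (edges G))"

definition delete_edge :: "'a graph \<Rightarrow> 'a set \<Rightarrow> 'a graph" where
  "delete_edge G e = (verts G, edges G - {e})"

definition complete_graph :: "nat \<Rightarrow> nat graph" where
  "complete_graph t = ({0..<t}, {{i, j} | i j. i < t \<and> j < t \<and> i \<noteq> j})"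

definition is_complete :: "'a graph \<Rightarrow> bool" where
  "is_complete G \<longleftrightarrow> (\<forall>u\<in>verts G. \<forall>v\<in>verts G. u \<noteq> v \<longrightarrow> {u, v} \<in> edges G)"

definition blowup :: "'a graph \<Rightarrow> 'b graph \<Rightarrow> ('a \<times> 'b) graph" where
  "blowup G H = (verts G \<times> verts H,
     {{(u, a), (v, b)} | u v a b. u \<in> verts G \<and> v \<in> verts G \<and> a \<in> verts H \<and> b \<in> verts H \<and>
        ((u = v \<and> {a, b} \<in> edges H) \<or> (u \<noteq> v \<and> {u, v} \<in> edges G))})"

definition embedding :: "('b \<Rightarrow> 'a) \<Rightarrow> 'b graph \<Rightarrow> 'a graph \<Rightarrow> bool" where
  "embedding f H G \<longleftrightarrow> inj_on f (verts H) \<and> f ` verts H \<subseteq> verts G \<and>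
     (\<forall>e\<in>edges H. f ` e \<in> edges G)"

definition contains_copy :: "'a graph \<Rightarrow> 'b graph \<Rightarrow> bool" where
  "contains_copy G H \<longleftrightarrow> (\<exists>f. embedding f H G)"

definition saturated :: "'b graph \<Rightarrow> 'a graph \<Rightarrow> bool" where
  "saturated F G \<longleftrightarrow> wf_graph G \<and> \<not> contains_copy G F \<and>
     (\<forall>e\<in>nonedges G. contains_copy (add_edge G e) F)"

definition oversaturated :: "'b graph \<Rightarrow> 'a graph \<Rightarrow> bool" where
  "oversaturated F G \<longleftrightarrow> wf_graph G \<and>
     (\<forall>e\<in>nonedges G. \<exists>f. embedding f F (add_edge G e) \<and> e \<in> (\<lambda>d. f ` d) ` edges F)"

definition automorphism :: "('a \<Rightarrow> 'a) \<Rightarrow> 'a graph \<Rightarrow> bool" where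
  "automorphism \<sigma> G \<longleftrightarrow> bij_betw \<sigma> (verts G) (verts G) \<and>
     (\<forall>u\<in>verts G. \<forall>v\<in>verts G. adj G (\<sigma> u) (\<sigma> v) \<longleftrightarrow> adj G u v)"

definition edge_transitive :: "'a graph \<Rightarrow> bool" where
  "edge_transitive G \<longleftrightarrow>
     (\<forall>e1\<in>edges G. \<forall>e2\<in>edges G. \<exists>\<sigma>. automorphism \<sigma> G \<and> \<sigma> ` e1 = e2)"

definition F'_t :: "'b graph \<Rightarrow> 'b \<Rightarrow> 'b \<Rightarrow> nat \<Rightarrow> ('b \<times> nat) graph" where
  "F'_t F x y t = add_edge (blowup (delete_edge F {x, y}) (complete_graph t)) {(x, 0), (y, 0)}"

text \<open>rsat(n,H): defined when some regular n-vertex H-saturated graph exists (every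
  n-vertex graph is isomorphic to one on {0..<n}).\<close>
definition rsat_defined :: "nat \<Rightarrow> 'b graph \<Rightarrow> bool" where
  "rsat_defined n H \<longleftrightarrow> (\<exists>G :: nat graph. verts G = {0..<n} \<and> regular G \<and> saturated H G)"

definition rsat :: "nat \<Rightarrow> 'b graph \<Rightarrow> nat" where
  "rsat n H = (LEAST m. \<exists>G :: nat graph. verts G = {0..<n} \<and> regular G \<and> saturated H G
                         \<and> card (edges G) = m)"

end

theory Submission
  imports Defs
begin

lemma vE[simp]: "verts (a, b) = a" "edges (a, b) = b" by (simp_all add: verts_def edges_def)

lemma cg_verts[simp]: "verts (complete_graph t) = {0..<t}"
  by (simp add: complete_graph_def)

lemma cg_edge: "{a, b} \<in> edges (complete_graph t) \<longleftrightarrow> a < t \<and> b < t \<and> a \<noteq> b"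
  by (auto simp: complete_graph_def doubleton_eq_iff)

lemma bl_verts[simp]: "verts (blowup G H) = verts G \<times> verts H"
  by (simp add: blowup_def)

lemma bl_edges_form: "e \<in> edges (blowup G (complete_graph t)) \<Longrightarrow>
   \<exists>u v a b. e = {(u,a),(v,b)} \<and> u \<in> verts G \<and> v \<in> verts G \<and> a < t \<and> b < t \<and>
     ((u = v \<and> a \<noteq> b) \<or> (u \<noteq> v \<and> {u, v} \<in> edges G))"
  unfolding blowup_def by (auto simp: cg_edge)

lemma bl_edge: "{(u,a),(v,b)} \<in> edges (blowup G (complete_graph t)) \<longleftrightarrow>
   u \<in> verts G \<and> v \<in> verts G \<and> a < t \<and> b < t \<and>
     ((u = v \<and> a \<noteq> b) \<or> (u \<noteq> v \<and> {u, v} \<in> edges G))"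
proof
  assume "{(u,a),(v,b)} \<in> edges (blowup G (complete_graph t))"
  from bl_edges_form[OF this] obtain u' v' a' b' where
    h: "{(u,a),(v,b)} = {(u',a'),(v',b')}" "u' \<in> verts G" "v' \<in> verts G" "a' < t" "b' < t"
     "((u' = v' \<and> a' \<noteq> b') \<or> (u' \<noteq> v' \<and> {u', v'} \<in> edges G))" by blast
  from h(1) have "(u = u' \<and> a = a' \<and> v = v' \<and> b = b') \<or> (u = v' \<and> a = b' \<and> v = u' \<and> b = a')"
    by (auto simp: doubleton_eq_iff)
  then show "u \<in> verts G \<and> v \<in> verts G \<and> a < t \<and> b < t \<and>
     ((u = v \<and> a \<noteq> b) \<or> (u \<noteq> v \<and> {u, v} \<in> edges G))"
    using h by (auto simp: insert_commute)
next
  assume "u \<in> verts G \<and> v \<in> verts G \<and> a < t \<and> b < t \<and>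
     ((u = v \<and> a \<noteq> b) \<or> (u \<noteq> v \<and> {u, v} \<in> edges G))"
  then show "{(u,a),(v,b)} \<in> edges (blowup G (complete_graph t))"
    unfolding blowup_def by (auto simp: cg_edge) 
qed

lemma wf_edge: "wf_graph G \<Longrightarrow> e \<in> edges G \<Longrightarrow> \<exists>u v. e = {u, v} \<and> u \<noteq> v \<and> u \<in> verts G \<and> v \<in> verts G"
  by (simp add: wf_graph_def)

lemma wf_edge2: "wf_graph G \<Longrightarrow> {u, v} \<in> edges G \<Longrightarrow> u \<in> verts G \<and> v \<in> verts G"
  unfolding wf_graph_def by (auto simp: doubleton_eq_iff)

lemma wf_blowup: "wf_graph G \<Longrightarrow> wf_graph (blowup G (complete_graph t))"
  unfolding wf_graph_def[of "blowup G (complete_graph t)"]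
  apply (intro conjI)
   apply (simp add: wf_graph_def)
  apply (auto dest!: bl_edges_form)
  done

lemma adj_bl: "adj (blowup G (complete_graph t)) (u,a) (v,b) \<longleftrightarrow>
   u \<in> verts G \<and> v \<in> verts G \<and> a < t \<and> b < t \<and>
     ((u = v \<and> a \<noteq> b) \<or> (u \<noteq> v \<and> {u, v} \<in> edges G))"
  unfolding adj_def bl_edge by auto

lemma adj_blp: "adj (blowup G (complete_graph t)) p q \<longleftrightarrow>
   fst p \<in> verts G \<and> fst q \<in> verts G \<and> snd p < t \<and> snd q < t \<and>
     ((fst p = fst q \<and> snd p \<noteq> snd q) \<or> (fst p \<noteq> fst q \<and> {fst p, fst q} \<in> edges G))"
  using adj_bl[of G t "fst p" "snd p" "fst q" "snd q"] by simp

lemma deg_bl: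
  assumes "u \<in> verts G" "a < t" "finite (verts G)"
  shows "degree (blowup G (complete_graph t)) (u,a) = (t - 1) + t * degree G u"
proof -
  have "{p \<in> verts (blowup G (complete_graph t)). adj (blowup G (complete_graph t)) (u,a) p}
     = ({u} \<times> ({0..<t} - {a})) \<union> ({v \<in> verts G. adj G u v} \<times> {0..<t})"
    using assms unfolding adj_blp by (auto simp: adj_def)
  moreover have "card (({u} \<times> ({0..<t} - {a})) \<union> ({v \<in> verts G. adj G u v} \<times> {0..<t}))
     = card ({u} \<times> ({0..<t} - {a})) + card ({v \<in> verts G. adj G u v} \<times> {0..<t})"
    by (rule card_Un_disjoint) (use assms in \<open>auto simp: adj_def\<close>)
  ultimately show ?thesis using assms
    by (simp add: degree_def card_cartesian_product mult.commute)
qed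

lemma reg_bl: "wf_graph G \<Longrightarrow> regular G \<Longrightarrow> regular (blowup G (complete_graph t))"
  unfolding regular_def
  by (auto simp: deg_bl wf_graph_def)

lemma ae_simps[simp]: "verts (add_edge G e) = verts G" "edges (add_edge G e) = insert e (edges G)"
  "verts (delete_edge G e) = verts G" "edges (delete_edge G e) = edges G - {e}"
  by (simp_all add: add_edge_def delete_edge_def)

lemma Ft_verts[simp]: "verts (F'_t F x y t) = verts F \<times> {0..<t}"
  by (simp add: F'_t_def)

lemma Ft_edges: "edges (F'_t F x y t) = insert {(x,0),(y,0)} (edges (blowup (delete_edge F {x,y}) (complete_graph t)))"
  by (simp add: F'_t_def)

lemma nonedge_bl:
  assumes "e \<in> nonedges (blowup G (complete_graph t))"
  shows "\<exists>u a v b. e = {(u,a),(v,b)} \<and> u \<noteq> v \<and> {u,v} \<in> nonedges G \<and> a < t \<and> b < t"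
proof -
  from assms obtain p q where h: "e = {p,q}" "p \<in> verts G \<times> {0..<t}" "q \<in> verts G \<times> {0..<t}" "p \<noteq> q"
    "{p,q} \<notin> edges (blowup G (complete_graph t))" unfolding nonedges_def by auto
  obtain u a v b where pq: "p = (u,a)" "q = (v,b)" by fastforce
  have "u \<noteq> v \<and> {u,v} \<notin> edges G" using h unfolding pq bl_edge by auto
  then have "{u,v} \<in> nonedges G" using h unfolding pq nonedges_def by auto
  moreover have "a < t" "b < t" using h(2,3) unfolding pq by auto
  ultimately show ?thesis using h(1) \<open>u \<noteq> v \<and> {u,v} \<notin> edges G\<close> unfolding pq by blast
qed

lemma sat_copy:
  assumes "saturated F G" "e \<in> nonedges G"
  shows "\<exists>\<phi>. embedding \<phi> F (add_edge G e) \<and> (\<exists>d\<in>edges F. \<phi> ` d = e)"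
proof -
  from assms obtain \<phi> where ph: "embedding \<phi> F (add_edge G e)"
    unfolding saturated_def contains_copy_def by blast
  have "\<exists>d\<in>edges F. \<phi> ` d = e"
  proof (rule ccontr)
    assume "\<not> ?thesis"
    then have "embedding \<phi> F G" using ph unfolding embedding_def by auto
    then show False using assms(1) unfolding saturated_def contains_copy_def by blast
  qed
  then show ?thesis using ph by blast
qed

lemma emb_auto:
  assumes "wf_graph F" "automorphism \<sigma> F" "embedding \<phi> F H"
  shows "embedding (\<phi> \<circ> \<sigma>) F H"
proof -
  have bij: "bij_betw \<sigma> (verts F) (verts F)" using assms(2) by (simp add: automorphism_def)
  have "inj_on (\<phi> \<circ> \<sigma>) (verts F)"
    using bij assms(3) unfolding embedding_def bij_betw_def by (auto intro: comp_inj_on)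
  moreover have "(\<phi> \<circ> \<sigma>) ` verts F \<subseteq> verts H"
    using bij assms(3) unfolding embedding_def bij_betw_def by (auto simp: image_comp[symmetric])
  moreover have "(\<phi> \<circ> \<sigma>) ` e \<in> edges H" if e: "e \<in> edges F" for e
  proof -
    obtain p q where pq: "e = {p,q}" "p \<noteq> q" "p \<in> verts F" "q \<in> verts F"
      using wf_edge[OF assms(1) e] by blast
    have "adj F p q" using pq e by (simp add: adj_def)
    then have "adj F (\<sigma> p) (\<sigma> q)" using assms(2) pq unfolding automorphism_def by blast
    then have "{\<sigma> p, \<sigma> q} \<in> edges F" by (simp add: adj_def)
    then have "\<phi> ` {\<sigma> p, \<sigma> q} \<in> edges H" using assms(3) unfolding embedding_def by blast
    then show ?thesis using pq by simp
  qed
  ultimately show ?thesis unfolding embedding_def by blast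
qed

definition sw :: "nat \<Rightarrow> nat \<Rightarrow> nat" where
  "sw c i = (if i = 0 then c else if i = c then 0 else i)"

lemma sw_inj: "sw c i = sw c j \<Longrightarrow> i = j"
  unfolding sw_def by (auto split: if_splits)

lemma sw_lt: "c < t \<Longrightarrow> i < t \<Longrightarrow> sw c i < t"
  unfolding sw_def by auto

lemma sw_0[simp]: "sw c 0 = c" by (simp add: sw_def)

lemma oversat:
  assumes wfF: "wf_graph F" and et: "edge_transitive F" and xy: "{x, y} \<in> edges F" "x \<noteq> y"
    and sat: "saturated F G"
  shows "oversaturated (F'_t F x y t) (blowup G (complete_graph t))"
  unfolding oversaturated_def
proof (intro conjI ballI)
  have wfG: "wf_graph G" using sat by (simp add: saturated_def)
  then show "wf_graph (blowup G (complete_graph t))" by (rule wf_blowup)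
  fix e assume "e \<in> nonedges (blowup G (complete_graph t))"
  from nonedge_bl[OF this] obtain u a v b where
    e: "e = {(u,a),(v,b)}" "u \<noteq> v" "{u,v} \<in> nonedges G" "a < t" "b < t" by blast
  from sat_copy[OF sat e(3)] obtain \<phi> d where
    ph: "embedding \<phi> F (add_edge G {u,v})" "d \<in> edges F" "\<phi> ` d = {u,v}" by blast
  from et xy ph(2) obtain \<sigma> where sg: "automorphism \<sigma> F" "\<sigma> ` {x,y} = d"
    unfolding edge_transitive_def by blast
  define \<psi> where "\<psi> = \<phi> \<circ> \<sigma>"
  have psi: "embedding \<psi> F (add_edge G {u,v})" unfolding \<psi>_def by (rule emb_auto[OF wfF sg(1) ph(1)])
  have psixy: "\<psi> ` {x,y} = {u,v}"
  proof -
    have "\<psi> ` {x,y} = \<phi> ` (\<sigma> ` {x,y})" unfolding \<psi>_def by (simp only: image_comp)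
    with sg(2) ph(3) show ?thesis by (simp only:)
  qed
  have xyV: "x \<in> verts F" "y \<in> verts F" using wf_edge2[OF wfF xy(1)] by auto
  define \<alpha> where "\<alpha> = (if \<psi> x = u then a else b)"
  define \<beta> where "\<beta> = (if \<psi> x = u then b else a)"
  define \<pi> where "\<pi> w = (if w = x then sw \<alpha> else if w = y then sw \<beta> else id)" for w
  define f where "f p = (\<psi> (fst p), \<pi> (fst p) (snd p))" for p
  have ab: "\<alpha> < t" "\<beta> < t" using e unfolding \<alpha>_def \<beta>_def by auto
  have pi_inj: "\<pi> w i = \<pi> w j \<Longrightarrow> i = j" for w i j
    unfolding \<pi>_def by (auto split: if_splits dest: sw_inj)
  have pi_lt: "i < t \<Longrightarrow> \<pi> w i < t" for w i
    unfolding \<pi>_def using ab by (auto intro: sw_lt)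
  have psi_inj: "inj_on \<psi> (verts F)" and psi_V: "\<psi> ` verts F \<subseteq> verts G"
    and psi_E: "\<And>d. d \<in> edges F \<Longrightarrow> \<psi> ` d \<in> insert {u,v} (edges G)"
    using psi unfolding embedding_def by auto
  have fx: "f (x,0) = (\<psi> x, \<alpha>)" and fy: "f (y,0) = (\<psi> y, \<beta>)"
    unfolding f_def \<pi>_def using xy(2) by auto
  have fxy: "f ` {(x,0),(y,0)} = e"
  proof -
    have "\<psi> x = u \<and> \<psi> y = v \<or> \<psi> x = v \<and> \<psi> y = u" using psixy e(2) by (auto simp: doubleton_eq_iff)
    then show ?thesis
    proof
      assume h: "\<psi> x = u \<and> \<psi> y = v"
      then have "\<alpha> = a" "\<beta> = b" unfolding \<alpha>_def \<beta>_def by auto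
      then show ?thesis using h fx fy e(1) by simp
    next
      assume h: "\<psi> x = v \<and> \<psi> y = u"
      then have "\<alpha> = b" "\<beta> = a" unfolding \<alpha>_def \<beta>_def using e(2) by auto
      then show ?thesis using h fx fy e(1) by (simp add: insert_commute)
    qed
  qed
  have emb: "embedding f (F'_t F x y t) (add_edge (blowup G (complete_graph t)) e)"
    unfolding embedding_def
  proof (intro conjI ballI)
    show "inj_on f (verts (F'_t F x y t))"
    proof (rule inj_onI)
      fix p q assume pq: "p \<in> verts (F'_t F x y t)" "q \<in> verts (F'_t F x y t)" "f p = f q"
      then have "\<psi> (fst p) = \<psi> (fst q)" unfolding f_def by simp
      moreover have "fst p \<in> verts F" "fst q \<in> verts F" using pq(1,2) by auto
      ultimately have 1: "fst p = fst q" using inj_onD[OF psi_inj] by blast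
      then have "\<pi> (fst p) (snd p) = \<pi> (fst p) (snd q)" using pq(3) unfolding f_def by simp
      then have "snd p = snd q" by (rule pi_inj)
      then show "p = q" using 1 by (simp add: prod_eq_iff)
    qed
    show "f ` verts (F'_t F x y t) \<subseteq> verts (add_edge (blowup G (complete_graph t)) e)"
      using psi_V pi_lt unfolding f_def by auto
    fix d' assume "d' \<in> edges (F'_t F x y t)"
    then consider "d' = {(x,0),(y,0)}" | "d' \<in> edges (blowup (delete_edge F {x,y}) (complete_graph t))"
      unfolding Ft_edges by blast
    then show "f ` d' \<in> edges (add_edge (blowup G (complete_graph t)) e)"
    proof cases
      case 1 then show ?thesis using fxy by simp
    next
      case 2
      from bl_edges_form[OF this] obtain w w' i j where
        d: "d' = {(w,i),(w',j)}" "w \<in> verts F" "w' \<in> verts F" "i < t" "j < t"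
           "(w = w' \<and> i \<noteq> j) \<or> (w \<noteq> w' \<and> {w, w'} \<in> edges F - {{x,y}})"
        unfolding ae_simps by blast
      have fd: "f ` d' = {(\<psi> w, \<pi> w i), (\<psi> w', \<pi> w' j)}" unfolding d f_def by simp
      from d(6) show ?thesis
      proof
        assume "w = w' \<and> i \<noteq> j"
        then have "\<pi> w i \<noteq> \<pi> w j" using pi_inj by blast
        then show ?thesis unfolding fd using d psi_V pi_lt \<open>w = w' \<and> i \<noteq> j\<close>
          by (auto simp: bl_edge)
      next
        assume h: "w \<noteq> w' \<and> {w, w'} \<in> edges F - {{x,y}}"
        have ne: "\<psi> w \<noteq> \<psi> w'" using h inj_onD[OF psi_inj] d(2,3) by blast
        have "\<psi> ` {w,w'} \<in> insert {u,v} (edges G)" using psi_E h by blast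
        moreover have "\<psi> ` {w,w'} \<noteq> {u,v}"
        proof
          assume "\<psi> ` {w,w'} = {u,v}"
          then have "\<psi> ` {w,w'} = \<psi> ` {x,y}" using psixy by simp
          moreover have sub: "{w,w'} \<subseteq> verts F" "{x,y} \<subseteq> verts F" using d(2,3) xyV by auto
          ultimately have "{w,w'} = {x,y}"
            using inj_on_image_eq_iff[OF psi_inj sub] by blast
          then show False using h by simp
        qed
        ultimately have "{\<psi> w, \<psi> w'} \<in> edges G" by simp
        then show ?thesis unfolding fd using d psi_V pi_lt ne
          by (auto simp: bl_edge)
      qed
    qed
  qed
  show "\<exists>f. embedding f (F'_t F x y t) (add_edge (blowup G (complete_graph t)) e) \<and>
         e \<in> (\<lambda>d. f ` d) ` edges (F'_t F x y t)"
  proof (intro exI conjI)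
    show "embedding f (F'_t F x y t) (add_edge (blowup G (complete_graph t)) e)" by (rule emb)
    have "{(x,0),(y,0)} \<in> edges (F'_t F x y t)" by (simp add: Ft_edges)
    then show "e \<in> (\<lambda>d. f ` d) ` edges (F'_t F x y t)" using fxy by (rule rev_image_eqI[OF _ sym])
  qed
qed

definition clique :: "'a graph \<Rightarrow> 'a set \<Rightarrow> bool" where
  "clique G C \<longleftrightarrow> C \<subseteq> verts G \<and> (\<forall>u\<in>C. \<forall>v\<in>C. u \<noteq> v \<longrightarrow> {u,v} \<in> edges G)"

lemma clique_bound:
  assumes wfF: "wf_graph F" and cF: "is_complete F" and wfG: "wf_graph G"
    and nc: "\<not> contains_copy G F" and cl: "clique G C"
  shows "card C < card (verts F)"
proof (rule ccontr)
  assume "\<not> ?thesis"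
  then have "card (verts F) \<le> card C" by simp
  then obtain C' where C': "C' \<subseteq> C" "card C' = card (verts F)" "finite C'"
    by (rule obtain_subset_with_card_n)
  have finF: "finite (verts F)" using wfF by (simp add: wf_graph_def)
  obtain h where h: "bij_betw h (verts F) C'"
    using finite_same_card_bij[OF finF C'(3)] C'(2) by auto
  have "embedding h F G"
    unfolding embedding_def
  proof (intro conjI ballI)
    show "inj_on h (verts F)" using h by (simp add: bij_betw_def)
    show "h ` verts F \<subseteq> verts G" using h C'(1) cl by (auto simp: bij_betw_def clique_def)
    fix e assume "e \<in> edges F"
    then obtain p q where pq: "e = {p,q}" "p \<noteq> q" "p \<in> verts F" "q \<in> verts F"
      using wf_edge[OF wfF] by blast
    have "h p \<noteq> h q" using h pq by (auto simp: bij_betw_def inj_on_def)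
    moreover have "h p \<in> C" "h q \<in> C" using h pq C'(1) by (auto simp: bij_betw_def)
    ultimately have "{h p, h q} \<in> edges G" using cl by (auto simp: clique_def)
    then show "h ` e \<in> edges G" using pq by simp
  qed
  then show False using nc by (auto simp: contains_copy_def)
qed

lemma bl_edgep: "{p,q} \<in> edges (blowup G (complete_graph t)) \<longleftrightarrow>
   fst p \<in> verts G \<and> fst q \<in> verts G \<and> snd p < t \<and> snd q < t \<and>
     ((fst p = fst q \<and> snd p \<noteq> snd q) \<or> (fst p \<noteq> fst q \<and> {fst p, fst q} \<in> edges G))"
  using bl_edge[of "fst p" "snd p" "fst q" "snd q" G t] by simp

lemma clique_proj:
  assumes "clique (blowup G (complete_graph t)) K"
  shows "clique G (fst ` K)"
  unfolding clique_def
proof (intro conjI ballI impI)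
  show "fst ` K \<subseteq> verts G" using assms by (auto simp: clique_def)
  fix u v assume "u \<in> fst ` K" "v \<in> fst ` K" "u \<noteq> v"
  then obtain p q where pq: "p \<in> K" "q \<in> K" "u = fst p" "v = fst q" by auto
  then have "p \<noteq> q" using \<open>u \<noteq> v\<close> by auto
  then have "{p,q} \<in> edges (blowup G (complete_graph t))" using assms pq by (auto simp: clique_def)
  then show "{u,v} \<in> edges G" using pq \<open>u \<noteq> v\<close> unfolding bl_edgep by auto
qed

lemma fiber_card:
  assumes "K \<subseteq> verts G \<times> {0..<t}" "finite (verts G)"
  shows "card K \<le> card (fst ` K) * t" "card K = card (fst ` K) * t \<Longrightarrow> K = fst ` K \<times> {0..<t}"
proof -
  have sub: "K \<subseteq> fst ` K \<times> {0..<t}" using assms(1) by force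
  have fin: "finite (fst ` K \<times> {0..<t})"
    using assms by (auto intro!: finite_imageI finite_subset[of K "verts G \<times> {0..<t}"])
  show "card K \<le> card (fst ` K) * t"
    using card_mono[OF fin sub] by (simp add: card_cartesian_product)
  assume "card K = card (fst ` K) * t"
  then show "K = fst ` K \<times> {0..<t}"
    using card_subset_eq[OF fin sub] by (simp add: card_cartesian_product)
qed

lemma emb_clique:
  assumes emb: "embedding f H B" and S: "S \<subseteq> verts H"
    and pw: "\<And>p q. p \<in> S \<Longrightarrow> q \<in> S \<Longrightarrow> p \<noteq> q \<Longrightarrow> {p,q} \<in> edges H"
  shows "clique B (f ` S)"
  unfolding clique_def
proof (intro conjI ballI impI)
  show "f ` S \<subseteq> verts B" using emb S by (auto simp: embedding_def)
  fix a b assume "a \<in> f ` S" "b \<in> f ` S" "a \<noteq> b"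
  then obtain p q where pq: "p \<in> S" "q \<in> S" "a = f p" "b = f q" by auto
  then have "p \<noteq> q" using \<open>a \<noteq> b\<close> by auto
  then have "{p,q} \<in> edges H" using pw pq by blast
  then have "f ` {p,q} \<in> edges B" using emb unfolding embedding_def by blast
  then show "{a,b} \<in> edges B" using pq by simp
qed

lemma Ft_pw:
  assumes cF: "is_complete F" and S: "S \<subseteq> (verts F - {z}) \<times> {0..<t}" and z: "z = x \<or> z = y"
    and p: "p \<in> S" and q: "q \<in> S" and pq: "p \<noteq> q"
  shows "{p,q} \<in> edges (F'_t F x y t)"
proof -
  obtain w i w' j where d: "p = (w,i)" "q = (w',j)" by fastforce
  have h: "w \<in> verts F" "w' \<in> verts F" "i < t" "j < t" "w \<noteq> z" "w' \<noteq> z" using S p q d by auto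
  have "{(w,i),(w',j)} \<in> edges (blowup (delete_edge F {x,y}) (complete_graph t))"
  proof (cases "w = w'")
    case True then show ?thesis using h pq d by (simp add: bl_edge)
  next
    case False
    then have "{w,w'} \<in> edges F" using cF h by (auto simp: is_complete_def)
    moreover have "{w,w'} \<noteq> {x,y}" using h z by (auto simp: doubleton_eq_iff)
    ultimately show ?thesis using h False by (simp add: bl_edge)
  qed
  then show ?thesis using d by (simp add: Ft_edges)
qed

lemma sub_int_times: "A \<subseteq> P \<times> T \<Longrightarrow> A \<subseteq> Q \<times> T \<Longrightarrow> A \<subseteq> (P \<inter> Q) \<times> T"
  by (auto simp: subset_iff)

lemma no_copy:
  assumes wfF: "wf_graph F" and xy: "{x, y} \<in> edges F" "x \<noteq> y"
    and sat: "saturated F G" and cF: "is_complete F" and s3: "card (verts F) \<ge> 3" and t1: "t \<ge> 1"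
  shows "\<not> contains_copy (blowup G (complete_graph t)) (F'_t F x y t)"
proof
  assume "contains_copy (blowup G (complete_graph t)) (F'_t F x y t)"
  then obtain f where emb: "embedding f (F'_t F x y t) (blowup G (complete_graph t))"
    by (auto simp: contains_copy_def)
  define B where "B = blowup G (complete_graph t)"
  define V where "V = verts F"
  define s where "s = card V"
  have wfG: "wf_graph G" and ncG: "\<not> contains_copy G F" using sat by (auto simp: saturated_def)
  have finG: "finite (verts G)" using wfG by (simp add: wf_graph_def)
  have s3': "s \<ge> 3" using s3 by (simp add: s_def V_def)
  have finV: "finite V" using wfF by (simp add: wf_graph_def V_def)
  have xyV: "x \<in> V" "y \<in> V" using wf_edge2[OF wfF xy(1)] by (auto simp: V_def)
  have inj: "inj_on f (V \<times> {0..<t})" using emb by (simp add: embedding_def V_def)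
  have fV: "f ` (V \<times> {0..<t}) \<subseteq> verts G \<times> {0..<t}" using emb by (simp add: embedding_def V_def)
  have cb: "clique G C \<Longrightarrow> card C < s" for C
    using clique_bound[OF wfF cF wfG ncG] by (simp add: s_def V_def)
  have tpos: "t > 0" using t1 by simp
  have big: "\<exists>P. f ` ((V - {z}) \<times> {0..<t}) = P \<times> {0..<t} \<and> card P = s - 1 \<and> clique G P"
    if z: "z = x \<or> z = y" for z
  proof -
    have zV: "z \<in> V" using z xyV by auto
    define W where "W = f ` ((V - {z}) \<times> {0..<t})"
    have sub: "(V - {z}) \<times> {0..<t} \<subseteq> verts (F'_t F x y t)" by (auto simp: V_def)
    have clW: "clique B W" unfolding W_def B_def
      by (rule emb_clique[OF emb sub]) (rule Ft_pw[OF cF _ z], auto simp: V_def)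
    have cW: "card W = (s - 1) * t"
    proof -
      have "card W = card ((V - {z}) \<times> {0..<t})" unfolding W_def
        by (rule card_image) (rule inj_on_subset[OF inj], auto)
      also have "\<dots> = (s - 1) * t" using zV finV by (simp add: card_cartesian_product s_def)
      finally show ?thesis .
    qed
    have Wsub: "W \<subseteq> verts G \<times> {0..<t}" unfolding W_def using fV by auto
    have clP: "clique G (fst ` W)" using clique_proj clW unfolding B_def by blast
    have "card (fst ` W) < s" by (rule cb[OF clP])
    moreover have "card W \<le> card (fst ` W) * t" by (rule fiber_card(1)[OF Wsub finG])
    moreover have "s - 1 \<le> card (fst ` W)"
      using \<open>card W \<le> card (fst ` W) * t\<close> cW tpos by simp
    ultimately have cP: "card (fst ` W) = s - 1" by linarith
    then have "W = fst ` W \<times> {0..<t}" using fiber_card(2)[OF Wsub finG] cW by simp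
    then show ?thesis using cP clP unfolding W_def by blast
  qed
  obtain P where P: "f ` ((V - {y}) \<times> {0..<t}) = P \<times> {0..<t}" "card P = s - 1" "clique G P"
    using big by blast
  obtain Q where Q: "f ` ((V - {x}) \<times> {0..<t}) = Q \<times> {0..<t}" "card Q = s - 1" "clique G Q"
    using big by blast
  have "P \<subseteq> verts G" "Q \<subseteq> verts G" using P(3) Q(3) by (auto simp: clique_def)
  then have finP: "finite P" "finite Q" using finite_subset finG by blast+
  have x0: "(x,0) \<in> V \<times> {0..<t}" "(y,0) \<in> V \<times> {0..<t}" using xyV tpos by auto
  have "(x,0) \<in> (V - {y}) \<times> {0..<t}" using xy(2) xyV tpos by auto
  then have "f (x,0) \<in> f ` ((V - {y}) \<times> {0..<t})" by (rule imageI)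
  then have fx: "f (x,0) \<in> P \<times> {0..<t}" using P(1) by simp
  have "(y,0) \<in> (V - {x}) \<times> {0..<t}" using xy(2) xyV tpos by auto
  then have "f (y,0) \<in> f ` ((V - {x}) \<times> {0..<t})" by (rule imageI)
  then have fy: "f (y,0) \<in> Q \<times> {0..<t}" using Q(1) by simp
  have PQ: "P \<noteq> Q"
  proof
    assume "P = Q"
    then have "f (x,0) \<in> f ` ((V - {x}) \<times> {0..<t})" using fx Q(1) by simp
    then obtain p where p: "p \<in> (V - {x}) \<times> {0..<t}" "f (x,0) = f p" by auto
    have "p \<in> V \<times> {0..<t}" using p(1) by auto
    then have "(x,0) = p" using inj_onD[OF inj p(2) x0(1)] by blast
    then show False using p by auto
  qed
  define R where "R = (V - {x,y}) \<times> {0..<t}"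
  have fR: "f ` R \<subseteq> (P \<inter> Q) \<times> {0..<t}"
  proof -
    have "R \<subseteq> (V - {y}) \<times> {0..<t}" "R \<subseteq> (V - {x}) \<times> {0..<t}" unfolding R_def by auto
    then have "f ` R \<subseteq> f ` ((V - {y}) \<times> {0..<t})" "f ` R \<subseteq> f ` ((V - {x}) \<times> {0..<t})"
      by (auto intro: image_mono)
    then have "f ` R \<subseteq> P \<times> {0..<t}" "f ` R \<subseteq> Q \<times> {0..<t}" using P(1) Q(1) by simp_all
    then show ?thesis by (rule sub_int_times)
  qed
  have cR: "card (f ` R) = (s - 2) * t"
  proof -
    have "R \<subseteq> V \<times> {0..<t}" unfolding R_def by auto
    then have "inj_on f R" by (rule inj_on_subset[OF inj])
    then have "card (f ` R) = card R" by (rule card_image)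
    also have "\<dots> = card (V - {x,y}) * t" unfolding R_def by (simp add: card_cartesian_product)
    also have "card (V - {x,y}) = card V - card {x,y}"
      using xyV finV by (intro card_Diff_subset) auto
    also have "card {x,y} = 2" using xy(2) by simp
    finally show ?thesis by (simp add: s_def)
  qed
  have finPQ: "finite ((P \<inter> Q) \<times> {0..<t})" using finP by auto
  have "(s - 2) * t \<le> card (P \<inter> Q) * t"
    using card_mono[OF finPQ fR] cR by (simp add: card_cartesian_product)
  then have c1: "s - 2 \<le> card (P \<inter> Q)" using tpos by simp
  have "P \<inter> Q \<subset> P"
  proof -
    have "P \<inter> Q \<noteq> P"
    proof
      assume "P \<inter> Q = P" then have "P \<subseteq> Q" by blast
      then have "P = Q" using card_subset_eq[OF finP(2)] P(2) Q(2) by simp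
      then show False using PQ by simp
    qed
    then show ?thesis by blast
  qed
  then have "card (P \<inter> Q) < s - 1" using psubset_card_mono[OF finP(1)] P(2) by simp
  then have cPQ: "card (P \<inter> Q) = s - 2" using c1 s3' by simp
  have fReq: "f ` R = (P \<inter> Q) \<times> {0..<t}"
    using card_subset_eq[OF finPQ fR] cR cPQ by (simp add: card_cartesian_product)
  have xR: "f (x,0) \<notin> f ` R"
  proof
    assume "f (x,0) \<in> f ` R"
    then obtain p where p: "p \<in> R" "f (x,0) = f p" by auto
    have "p \<in> V \<times> {0..<t}" using p(1) by (auto simp: R_def)
    then have "(x,0) = p" using inj_onD[OF inj p(2) x0(1)] by blast
    then show False using p by (auto simp: R_def)
  qed
  have yR: "f (y,0) \<notin> f ` R"
  proof
    assume "f (y,0) \<in> f ` R"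
    then obtain p where p: "p \<in> R" "f (y,0) = f p" by auto
    have "p \<in> V \<times> {0..<t}" using p(1) by (auto simp: R_def)
    then have "(y,0) = p" using inj_onD[OF inj p(2) x0(2)] by blast
    then show False using p by (auto simp: R_def)
  qed
  define a where "a = fst (f (x,0))"
  define b where "b = fst (f (y,0))"
  have aP: "a \<in> P" "a \<notin> Q" using fx xR fReq unfolding a_def by auto
  have bQ: "b \<in> Q" "b \<notin> P" using fy yR fReq unfolding b_def by auto
  have "f ` {(x,0),(y,0)} \<in> edges B" using emb unfolding B_def embedding_def by (simp add: Ft_edges)
  then have "{f (x,0), f (y,0)} \<in> edges (blowup G (complete_graph t))" by (simp add: B_def)
  then have abE: "{a,b} \<in> edges G" using aP bQ unfolding bl_edgep a_def b_def by auto
  have PmQ: "P - Q = {a}"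
  proof -
    have "card (P - Q) = 1" using card_Diff_subset_Int[of P Q] finP P(2) cPQ s3'
      by (simp add: card_Diff_subset_Int Int_commute)
    then show ?thesis using aP by (metis card_1_singletonE DiffI singletonD)
  qed
  have QmP: "Q - P = {b}"
  proof -
    have "card (Q - P) = 1" using card_Diff_subset_Int[of Q P] finP Q(2) cPQ s3'
      by (simp add: Int_commute)
    then show ?thesis using bQ by (metis card_1_singletonE DiffI singletonD)
  qed
  have clU: "clique G (P \<union> Q)"
    unfolding clique_def
  proof (intro conjI ballI impI)
    show "P \<union> Q \<subseteq> verts G" using P(3) Q(3) by (auto simp: clique_def)
    fix u v assume uv: "u \<in> P \<union> Q" "v \<in> P \<union> Q" "u \<noteq> v"
    show "{u,v} \<in> edges G"
    proof (cases "u \<in> P \<and> v \<in> P")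
      case True then show ?thesis using P(3) uv by (auto simp: clique_def)
    next
      case F1: False
      show ?thesis
      proof (cases "u \<in> Q \<and> v \<in> Q")
        case True then show ?thesis using Q(3) uv by (auto simp: clique_def)
      next
        case False
        then have "(u = a \<and> v = b) \<or> (u = b \<and> v = a)" using F1 uv PmQ QmP by blast
        then show ?thesis using abE by (auto simp: insert_commute)
      qed
    qed
  qed
  have "card (P \<union> Q) = s"
  proof -
    have "card (P \<union> Q) + card (P \<inter> Q) = card P + card Q" using card_Un_Int[OF finP] by simp
    then show ?thesis using P(2) Q(2) cPQ s3' by simp
  qed
  then show False using cb[OF clU] by simp
qed

definition kn :: "nat \<Rightarrow> nat \<Rightarrow> nat set graph" where
  "kn n k = ({A. A \<subseteq> {0..<n} \<and> card A = k},
     {{A, B} | A B. A \<subseteq> {0..<n} \<and> card A = k \<and> B \<subseteq> {0..<n} \<and> card B = k \<and> A \<inter> B = {}})"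

lemma kn_verts: "verts (kn n k) = {A. A \<subseteq> {0..<n} \<and> card A = k}"
  by (simp add: kn_def)

lemma kn_edges_form: "e \<in> edges (kn n k) \<Longrightarrow> \<exists>A B. e = {A,B} \<and> A \<in> verts (kn n k) \<and> B \<in> verts (kn n k) \<and> A \<inter> B = {}"
  by (auto simp: kn_def)

lemma kn_edge: "{A,B} \<in> edges (kn n k) \<longleftrightarrow> A \<in> verts (kn n k) \<and> B \<in> verts (kn n k) \<and> A \<inter> B = {}"
proof
  assume "{A,B} \<in> edges (kn n k)"
  from kn_edges_form[OF this] obtain A' B' where h: "{A,B} = {A',B'}" "A' \<in> verts (kn n k)"
    "B' \<in> verts (kn n k)" "A' \<inter> B' = {}" by blast
  from h(1) have "(A = A' \<and> B = B') \<or> (A = B' \<and> B = A')" by (auto simp: doubleton_eq_iff)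
  then show "A \<in> verts (kn n k) \<and> B \<in> verts (kn n k) \<and> A \<inter> B = {}" using h by auto
next
  assume "A \<in> verts (kn n k) \<and> B \<in> verts (kn n k) \<and> A \<inter> B = {}"
  then show "{A,B} \<in> edges (kn n k)" by (auto simp: kn_def)
qed

lemma kn_fin: "finite (verts (kn n k))"
proof -
  have "verts (kn n k) \<subseteq> Pow {0..<n}" by (auto simp: kn_verts)
  then show ?thesis by (rule finite_subset) simp
qed

lemma kn_ne: "k \<ge> 1 \<Longrightarrow> A \<in> verts (kn n k) \<Longrightarrow> A \<noteq> {}"
  by (auto simp: kn_verts)

lemma kn_wf: assumes "k \<ge> 1" shows "wf_graph (kn n k)"
  unfolding wf_graph_def
proof (intro conjI ballI)
  show "finite (verts (kn n k))" by (rule kn_fin)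
  fix e assume "e \<in> edges (kn n k)"
  from kn_edges_form[OF this] obtain A B where h: "e = {A,B}" "A \<in> verts (kn n k)" "B \<in> verts (kn n k)" "A \<inter> B = {}"
    by blast
  have "A \<noteq> B" using h kn_ne[OF assms h(2)] by auto
  then show "\<exists>u v. e = {u, v} \<and> u \<noteq> v \<and> u \<in> verts (kn n k) \<and> v \<in> verts (kn n k)" using h by blast
qed

lemma kn_degree:
  assumes "k \<ge> 1" "A \<in> verts (kn n k)"
  shows "degree (kn n k) A = (n - k) choose k"
proof -
  have "{B \<in> verts (kn n k). adj (kn n k) A B} = {B. B \<subseteq> {0..<n} - A \<and> card B = k}"
  proof (intro set_eqI iffI)
    fix B assume "B \<in> {B \<in> verts (kn n k). adj (kn n k) A B}"
    then show "B \<in> {B. B \<subseteq> {0..<n} - A \<and> card B = k}"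
      using assms by (auto simp: adj_def kn_edge kn_verts)
  next
    fix B assume B: "B \<in> {B. B \<subseteq> {0..<n} - A \<and> card B = k}"
    then have Bv: "B \<in> verts (kn n k)" by (auto simp: kn_verts)
    have "A \<inter> B = {}" using B by auto
    moreover have "A \<noteq> B" using kn_ne[OF assms] \<open>A \<inter> B = {}\<close> by auto
    ultimately show "B \<in> {B \<in> verts (kn n k). adj (kn n k) A B}"
      using Bv assms(2) by (auto simp: adj_def kn_edge)
  qed
  moreover have "card ({0..<n} - A) = n - k" using assms(2) card_Diff_subset[of A "{0..<n}"] finite_subset[of A "{0..<n}"] by (auto simp: kn_verts)
  ultimately show ?thesis unfolding degree_def by (simp add: n_subsets)
qed

lemma kn_regular: "k \<ge> 1 \<Longrightarrow> regular (kn n k)"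
  unfolding regular_def using kn_degree by blast

lemma kn_nocopy:
  assumes k1: "k \<ge> 1" and s1: "s \<ge> 1" and n: "n = s * k - 1"
  shows "\<not> contains_copy (kn n k) (complete_graph s)"
proof
  assume "contains_copy (kn n k) (complete_graph s)"
  then obtain f where emb: "embedding f (complete_graph s) (kn n k)" by (auto simp: contains_copy_def)
  have fv: "f i \<in> verts (kn n k)" if "i < s" for i
    using emb that by (auto simp: embedding_def)
  have disj: "f i \<inter> f j = {}" if "i < s" "j < s" "i \<noteq> j" for i j
  proof -
    have "{i,j} \<in> edges (complete_graph s)" using that by (simp add: cg_edge)
    then have "f ` {i,j} \<in> edges (kn n k)" using emb unfolding embedding_def by blast
    then have "{f i, f j} \<in> edges (kn n k)" by simp
    then show ?thesis by (simp add: kn_edge)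
  qed
  have fin: "finite (f i)" if "i < s" for i
    using fv[OF that] by (auto simp: kn_verts intro: finite_subset)
  have "card (\<Union>i\<in>{0..<s}. f i) = (\<Sum>i\<in>{0..<s}. card (f i))"
    by (rule card_UN_disjoint) (use fin disj in auto)
  also have "\<dots> = (\<Sum>i\<in>{0..<s}. k)" using fv by (intro sum.cong) (auto simp: kn_verts)
  also have "\<dots> = s * k" by simp
  finally have c: "card (\<Union>i\<in>{0..<s}. f i) = s * k" .
  have "(\<Union>i\<in>{0..<s}. f i) \<subseteq> {0..<n}" by (rule UN_least) (use fv in \<open>auto simp: kn_verts\<close>)
  then have "card (\<Union>i\<in>{0..<s}. f i) \<le> n" using card_mono[of "{0..<n}"] by fastforce
  moreover have "s * k \<ge> 1" using k1 s1 by simp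
  ultimately show False using c n by linarith
qed

lemma blocks_disj:
  fixes g :: "nat \<Rightarrow> 'x" and k :: nat
  assumes inj: "inj_on g {0..<m*k}" and i: "i < m" and j: "j < m" and ij: "i \<noteq> j"
  shows "g ` {i*k..<i*k+k} \<inter> g ` {j*k..<j*k+k} = {}"
proof (rule ccontr)
  assume "\<not> ?thesis"
  then obtain a b where ab: "a \<in> {i*k..<i*k+k}" "b \<in> {j*k..<j*k+k}" "g a = g b" by blast
  have "Suc i \<le> m" "Suc j \<le> m" using i j by simp_all
  then have le: "Suc i * k \<le> m * k" "Suc j * k \<le> m * k" by (simp_all only: mult_le_mono1)
  have "a < m * k" "b < m * k" using ab le by auto
  then have "a = b" using inj_onD[OF inj ab(3)] by auto
  show False
  proof (cases "i < j")
    case True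
    then have "Suc i * k \<le> j * k" by (intro mult_le_mono1) simp
    then show False using ab \<open>a = b\<close> by auto
  next
    case False
    then have "Suc j * k \<le> i * k" using ij by (intro mult_le_mono1) simp
    then show False using ab \<open>a = b\<close> by auto
  qed
qed

lemma kn_nonedge:
  assumes k1: "k \<ge> 1" and s2: "s \<ge> 2" and n: "n = s * k - 1" and e: "e \<in> nonedges (kn n k)"
  shows "contains_copy (add_edge (kn n k) e) (complete_graph s)"
proof -
  obtain A B where AB: "e = {A,B}" "A \<in> verts (kn n k)" "B \<in> verts (kn n k)" "A \<noteq> B" "{A,B} \<notin> edges (kn n k)"
    using e unfolding nonedges_def by blast
  have AB2: "A \<subseteq> {0..<n}" "card A = k" "B \<subseteq> {0..<n}" "card B = k" using AB by (auto simp: kn_verts)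
  have finAB: "finite A" "finite B" using AB2 finite_subset by blast+
  have "A \<inter> B \<noteq> {}" using AB by (simp add: kn_edge)
  then have "card (A \<inter> B) \<ge> 1" using finAB by (simp add: card_gt_0_iff Suc_le_eq)
  moreover have "card (A \<union> B) + card (A \<inter> B) = 2 * k" using card_Un_Int[OF finAB] AB2 by simp
  ultimately have cU: "card (A \<union> B) + 1 \<le> 2 * k" by linarith
  define Rs where "Rs = {0..<n} - (A \<union> B)"
  have "card Rs = card {0..<n} - card (A \<union> B)" unfolding Rs_def
    using AB2 finAB by (intro card_Diff_subset) auto
  then have "card Rs = n - card (A \<union> B)" by simp
  moreover have "s * k \<ge> 2 * k" using s2 by simp
  moreover have "(s - 2) * k = s * k - 2 * k" by (simp add: diff_mult_distrib)
  ultimately have cR: "(s - 2) * k \<le> card Rs" using cU n by linarith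
  obtain T where T: "T \<subseteq> Rs" "card T = (s - 2) * k" "finite T"
    using obtain_subset_with_card_n[OF cR] by blast
  obtain g where g: "bij_betw g {0..<card T} T" using ex_bij_betw_nat_finite[OF T(3)] by blast
  have ginj: "inj_on g {0..<(s-2)*k}" using g T(2) by (simp add: bij_betw_def)
  have gT: "g ` {0..<(s-2)*k} = T" using g T(2) by (simp add: bij_betw_def)
  define C where "C i = g ` {i*k..<i*k+k}" for i
  have Csub: "{i*k..<i*k+k} \<subseteq> {0..<(s-2)*k}" if "i < s - 2" for i
  proof -
    have "Suc i * k \<le> (s-2) * k" using that by (intro mult_le_mono1) simp
    then show ?thesis by auto
  qed
  have CT: "C i \<subseteq> T" if "i < s - 2" for i
    using Csub[OF that] gT unfolding C_def by blast
  have Cc: "card (C i) = k" if "i < s - 2" for i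
    unfolding C_def using inj_on_subset[OF ginj Csub[OF that]] by (simp add: card_image)
  have Cd: "C i \<inter> C j = {}" if "i < s - 2" "j < s - 2" "i \<noteq> j" for i j
    unfolding C_def by (rule blocks_disj[OF ginj that])
  have CAB: "C i \<inter> (A \<union> B) = {}" if "i < s - 2" for i
    using CT[OF that] T(1) unfolding Rs_def by blast
  have Cv: "C i \<in> verts (kn n k)" if "i < s - 2" for i
    using CT[OF that] T(1) Cc[OF that] unfolding Rs_def kn_verts by blast
  define h where "h i = (if i = 0 then A else if i = 1 then B else C (i - 2))" for i
  have hv: "h i \<in> verts (kn n k)" if "i < s" for i
    using that AB Cv unfolding h_def by auto
  have hd: "h i \<inter> h j = {}" if "i < s" "j < s" "i \<noteq> j" "\<not> (i \<le> 1 \<and> j \<le> 1)" for i j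
  proof (cases "i \<le> 1")
    case True
    then have "j \<ge> 2" "h j = C (j - 2)" "j - 2 < s - 2" using that unfolding h_def by auto
    moreover have "h i = A \<or> h i = B" using True unfolding h_def by auto
    ultimately show ?thesis using CAB by blast
  next
    case False
    then have hi: "h i = C (i - 2)" "i - 2 < s - 2" using that unfolding h_def by auto
    show ?thesis
    proof (cases "j \<le> 1")
      case True
      then have "h j = A \<or> h j = B" unfolding h_def by auto
      then show ?thesis using hi CAB by blast
    next
      case False
      then have "h j = C (j - 2)" "j - 2 < s - 2" "i - 2 \<noteq> j - 2" using that \<open>\<not> i \<le> 1\<close> unfolding h_def by auto
      then show ?thesis using hi Cd by simp
    qed
  qed
  have h01: "{h i, h j} = {A, B}" if "i \<le> 1" "j \<le> 1" "i \<noteq> j" for i j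
    using that unfolding h_def by (cases i; cases j) (auto simp: insert_commute)
  have hne: "h i \<noteq> {}" if "i < s" for i using kn_ne[OF k1 hv[OF that]] .
  have emb: "embedding h (complete_graph s) (add_edge (kn n k) e)"
    unfolding embedding_def
  proof (intro conjI ballI)
    show "inj_on h (verts (complete_graph s))"
    proof (rule inj_onI)
      fix i j assume ij: "i \<in> verts (complete_graph s)" "j \<in> verts (complete_graph s)" "h i = h j"
      show "i = j"
      proof (rule ccontr)
        assume "i \<noteq> j"
        show False
        proof (cases "i \<le> 1 \<and> j \<le> 1")
          case True
          then have "{h i, h j} = {A,B}" using h01 \<open>i \<noteq> j\<close> by blast
          then show False using ij(3) AB(4) by (auto simp: doubleton_eq_iff)
        next
          case False
          have "h i \<inter> h j = {}" by (rule hd) (use ij False \<open>i \<noteq> j\<close> in auto)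
          then have "h i = {}" using ij(3) by simp
          then show False using ij hne by auto
        qed
      qed
    qed
    show "h ` verts (complete_graph s) \<subseteq> verts (add_edge (kn n k) e)" using hv by auto
    fix d assume "d \<in> edges (complete_graph s)"
    then obtain i j where d: "d = {i,j}" "i < s" "j < s" "i \<noteq> j" by (auto simp: complete_graph_def)
    show "h ` d \<in> edges (add_edge (kn n k) e)"
    proof (cases "i \<le> 1 \<and> j \<le> 1")
      case True
      then show ?thesis using h01 d AB(1) by simp
    next
      case False
      then have "h i \<inter> h j = {}" using hd d by simp
      then have "{h i, h j} \<in> edges (kn n k)" using hv d by (simp add: kn_edge)
      then show ?thesis using d by simp
    qed
  qed
  then show ?thesis by (auto simp: contains_copy_def)
qed

lemma kn_sat:
  assumes k1: "k \<ge> 1" and s2: "s \<ge> 2" and n: "n = s * k - 1"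
  shows "saturated (complete_graph s) (kn n k)"
  unfolding saturated_def
  using kn_wf[OF k1] kn_nocopy[OF k1 _ n] kn_nonedge[OF k1 s2 n] s2 by auto

lemma sat_blow:
  assumes wfF: "wf_graph F" and et: "edge_transitive F" and xy: "{x, y} \<in> edges F" "x \<noteq> y"
    and sat: "saturated F G" and cF: "is_complete F" and s3: "card (verts F) \<ge> 3" and t1: "t \<ge> 1"
  shows "saturated (F'_t F x y t) (blowup G (complete_graph t))"
proof -
  have ov: "oversaturated (F'_t F x y t) (blowup G (complete_graph t))"
    by (rule oversat[OF wfF et xy sat])
  show ?thesis unfolding saturated_def
  proof (intro conjI ballI)
    show "wf_graph (blowup G (complete_graph t))" using ov by (simp add: oversaturated_def)
    show "\<not> contains_copy (blowup G (complete_graph t)) (F'_t F x y t)"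
      by (rule no_copy[OF wfF xy sat cF s3 t1])
    fix e assume "e \<in> nonedges (blowup G (complete_graph t))"
    then show "contains_copy (add_edge (blowup G (complete_graph t)) e) (F'_t F x y t)"
      using ov unfolding oversaturated_def contains_copy_def by blast
  qed
qed

definition tr :: "nat \<Rightarrow> nat \<Rightarrow> nat \<Rightarrow> nat" where
  "tr a c z = (if z = a then c else if z = c then a else z)"

lemma tr_inv: "tr a c (tr a c z) = z" by (simp add: tr_def)

lemma tr_bij: "a < s \<Longrightarrow> c < s \<Longrightarrow> bij_betw (tr a c) {0..<s} {0..<s}"
  by (rule bij_betw_byWitness[where f' = "tr a c"]) (auto simp: tr_inv tr_def)

lemma cg_wf: "wf_graph (complete_graph s)"
  by (auto simp: wf_graph_def complete_graph_def)

lemma cg_adj: "adj (complete_graph s) u v \<longleftrightarrow> u < s \<and> v < s \<and> u \<noteq> v"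
  by (auto simp: adj_def cg_edge)

lemma cg_et: "edge_transitive (complete_graph s)"
  unfolding edge_transitive_def
proof (intro ballI)
  fix e1 e2 assume "e1 \<in> edges (complete_graph s)" "e2 \<in> edges (complete_graph s)"
  then obtain a b c d where e: "e1 = {a,b}" "e2 = {c,d}" "a < s" "b < s" "c < s" "d < s" "a \<noteq> b" "c \<noteq> d"
    by (auto simp: complete_graph_def)
  define b' where "b' = tr a c b"
  have b': "b' < s" "b' \<noteq> c" using e unfolding b'_def tr_def by auto
  define \<sigma> where "\<sigma> = tr b' d \<circ> tr a c"
  have bij: "bij_betw \<sigma> {0..<s} {0..<s}" unfolding \<sigma>_def
    using tr_bij[OF e(3,5)] tr_bij[OF b'(1) e(6)] by (rule bij_betw_trans)
  have "\<sigma> a = c" using b' e unfolding \<sigma>_def tr_def by auto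
  moreover have "\<sigma> b = d" unfolding \<sigma>_def b'_def by (simp add: tr_def)
  ultimately have img: "\<sigma> ` e1 = e2" using e by auto
  have "automorphism \<sigma> (complete_graph s)"
    unfolding automorphism_def
  proof (intro conjI ballI)
    show "bij_betw \<sigma> (verts (complete_graph s)) (verts (complete_graph s))" using bij by simp
    fix u v assume uv: "u \<in> verts (complete_graph s)" "v \<in> verts (complete_graph s)"
    then have "\<sigma> u < s" "\<sigma> v < s" using bij by (auto simp: bij_betw_def)
    moreover have "\<sigma> u = \<sigma> v \<longleftrightarrow> u = v" using bij uv by (auto simp: bij_betw_def inj_on_def)
    ultimately show "adj (complete_graph s) (\<sigma> u) (\<sigma> v) \<longleftrightarrow> adj (complete_graph s) u v"
      using uv by (simp add: cg_adj)
  qed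
  then show "\<exists>\<sigma>. automorphism \<sigma> (complete_graph s) \<and> \<sigma> ` e1 = e2" using img by blast
qed

lemma cg_complete: "is_complete (complete_graph s)"
  by (auto simp: is_complete_def cg_edge)

lemma edge_count:
  assumes wf: "wf_graph H" and D: "\<And>v. v \<in> verts H \<Longrightarrow> degree H v \<le> D"
  shows "card (edges H) \<le> card (verts H) * D"
proof -
  have fin: "finite (verts H)" using wf by (simp add: wf_graph_def)
  have "edges H \<subseteq> (\<Union>v\<in>verts H. (\<lambda>u. {v,u}) ` {u \<in> verts H. adj H v u})"
  proof
    fix e assume "e \<in> edges H"
    then obtain u v where "e = {u,v}" "u \<noteq> v" "u \<in> verts H" "v \<in> verts H" using wf_edge[OF wf] by blast
    then show "e \<in> (\<Union>v\<in>verts H. (\<lambda>u. {v,u}) ` {u \<in> verts H. adj H v u})"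
      using \<open>e \<in> edges H\<close> by (auto simp: adj_def)
  qed
  then have "card (edges H) \<le> card (\<Union>v\<in>verts H. (\<lambda>u. {v,u}) ` {u \<in> verts H. adj H v u})"
    using fin by (intro card_mono) auto
  also have "\<dots> \<le> (\<Sum>v\<in>verts H. card ((\<lambda>u. {v,u}) ` {u \<in> verts H. adj H v u}))"
    using fin by (rule card_UN_le)
  also have "\<dots> \<le> (\<Sum>v\<in>verts H. D)"
  proof (rule sum_mono)
    fix v assume "v \<in> verts H"
    have "card ((\<lambda>u. {v,u}) ` {u \<in> verts H. adj H v u}) \<le> card {u \<in> verts H. adj H v u}"
      using fin by (intro card_image_le) auto
    also have "\<dots> \<le> D" using D[OF \<open>v \<in> verts H\<close>] by (simp add: degree_def)
    finally show "card ((\<lambda>u. {v,u}) ` {u \<in> verts H. adj H v u}) \<le> D" .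
  qed
  also have "\<dots> = card (verts H) * D" by simp
  finally show ?thesis .
qed

definition mapg :: "('v \<Rightarrow> 'w) \<Rightarrow> 'v graph \<Rightarrow> 'w graph" where
  "mapg g H = (g ` verts H, (\<lambda>e. g ` e) ` edges H)"

lemma mapg_simps[simp]: "verts (mapg g H) = g ` verts H" "edges (mapg g H) = (\<lambda>e. g ` e) ` edges H"
  by (simp_all add: mapg_def)

lemma emb_map:
  assumes emb: "embedding \<phi> F H1" and inj: "inj_on g (verts H1)" and V: "g ` verts H1 \<subseteq> verts H2"
    and E: "\<And>e. e \<in> edges H1 \<Longrightarrow> g ` e \<in> edges H2"
  shows "embedding (g \<circ> \<phi>) F H2"
  unfolding embedding_def
proof (intro conjI ballI)
  have e1: "inj_on \<phi> (verts F)" "\<phi> ` verts F \<subseteq> verts H1" "\<And>e. e \<in> edges F \<Longrightarrow> \<phi> ` e \<in> edges H1"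
    using emb by (auto simp: embedding_def)
  show "inj_on (g \<circ> \<phi>) (verts F)" by (rule comp_inj_on[OF e1(1) inj_on_subset[OF inj e1(2)]])
  show "(g \<circ> \<phi>) ` verts F \<subseteq> verts H2" using e1(2) V by (auto simp: image_comp[symmetric])
  fix e assume "e \<in> edges F"
  then have "g ` (\<phi> ` e) \<in> edges H2" using e1(3) E by blast
  then show "(g \<circ> \<phi>) ` e \<in> edges H2" by (simp add: image_comp)
qed

lemma mapg_adj:
  assumes wf: "wf_graph H" and inj: "inj_on g (verts H)" and p: "p \<in> verts H" and q: "q \<in> verts H"
  shows "adj (mapg g H) (g p) (g q) \<longleftrightarrow> adj H p q"
proof
  assume a: "adj (mapg g H) (g p) (g q)"
  then obtain e where e: "e \<in> edges H" "{g p, g q} = g ` e" "g p \<noteq> g q" by (auto simp: adj_def)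
  have "e \<subseteq> verts H" using wf_edge[OF wf e(1)] by auto
  moreover have "{p,q} \<subseteq> verts H" using p q by auto
  moreover have "g ` {p,q} = g ` e" using e(2) by simp
  ultimately have "{p,q} = e" using inj_on_image_eq_iff[OF inj] by blast
  then show "adj H p q" using e by (auto simp: adj_def)
next
  assume "adj H p q"
  then have "{p,q} \<in> edges H" "p \<noteq> q" by (auto simp: adj_def)
  moreover have "g p \<noteq> g q" using \<open>p \<noteq> q\<close> inj_onD[OF inj _ p q] by blast
  moreover have "g ` {p,q} \<in> (\<lambda>e. g ` e) ` edges H" using \<open>{p,q} \<in> edges H\<close> by (rule imageI)
  ultimately show "adj (mapg g H) (g p) (g q)" unfolding adj_def mapg_simps by simp
qed

lemma mapg_degree:
  assumes wf: "wf_graph H" and inj: "inj_on g (verts H)" and p: "p \<in> verts H"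
  shows "degree (mapg g H) (g p) = degree H p"
proof -
  have "{u \<in> verts (mapg g H). adj (mapg g H) (g p) u} = g ` {u \<in> verts H. adj H p u}"
    using mapg_adj[OF wf inj p] by auto
  moreover have "inj_on g {u \<in> verts H. adj H p u}" using inj by (rule inj_on_subset) auto
  ultimately show ?thesis unfolding degree_def by (simp add: card_image)
qed

lemma mapg_transfer:
  assumes wf: "wf_graph H" and inj: "inj_on g (verts H)"
  shows "wf_graph (mapg g H)" "regular H \<Longrightarrow> regular (mapg g H)"
    "saturated F H \<Longrightarrow> saturated F (mapg g H)" "card (edges (mapg g H)) \<le> card (edges H)"
proof -
  have finV: "finite (verts H)" using wf by (simp add: wf_graph_def)
  show wf': "wf_graph (mapg g H)"
    unfolding wf_graph_def
  proof (intro conjI ballI)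
    show "finite (verts (mapg g H))" using finV by simp
    fix e assume "e \<in> edges (mapg g H)"
    then obtain e' where e': "e' \<in> edges H" "e = g ` e'" by auto
    then obtain u v where "e' = {u,v}" "u \<noteq> v" "u \<in> verts H" "v \<in> verts H" using wf_edge[OF wf] by blast
    moreover then have "g u \<noteq> g v" using inj_onD[OF inj] by blast
    ultimately show "\<exists>u v. e = {u, v} \<and> u \<noteq> v \<and> u \<in> verts (mapg g H) \<and> v \<in> verts (mapg g H)"
      using e' by auto
  qed
  show "regular H \<Longrightarrow> regular (mapg g H)"
    unfolding regular_def using mapg_degree[OF wf inj] by auto
  have finE: "finite (edges H)"
  proof -
    have "edges H \<subseteq> Pow (verts H)" using wf_edge[OF wf] by blast
    then show ?thesis using finV by (meson finite_Pow_iff finite_subset)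
  qed
  show "card (edges (mapg g H)) \<le> card (edges H)" using finE by (simp add: card_image_le)
  assume sat: "saturated F H"
  show "saturated F (mapg g H)"
    unfolding saturated_def
  proof (intro conjI ballI)
    show "wf_graph (mapg g H)" by (rule wf')
    show "\<not> contains_copy (mapg g H) F"
    proof
      assume "contains_copy (mapg g H) F"
      then obtain \<phi> where \<phi>: "embedding \<phi> F (mapg g H)" by (auto simp: contains_copy_def)
      define g' where "g' = inv_into (verts H) g"
      have "embedding (g' \<circ> \<phi>) F H"
      proof (rule emb_map[OF \<phi>])
        show "inj_on g' (verts (mapg g H))" unfolding g'_def by (simp add: inj_on_inv_into)
        show "g' ` verts (mapg g H) \<subseteq> verts H" unfolding g'_def mapg_simps
          by (rule image_subsetI) (rule inv_into_into)
        fix e assume "e \<in> edges (mapg g H)"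
        then obtain e' where e': "e' \<in> edges H" "e = g ` e'" by auto
        have "e' \<subseteq> verts H" using wf_edge[OF wf e'(1)] by auto
        then have "g' ` e = e'" unfolding e'(2) g'_def by (rule inv_into_image_cancel[OF inj])
        then show "g' ` e \<in> edges H" using e' by simp
      qed
      then have "contains_copy H F" unfolding contains_copy_def by blast
      then show False using sat unfolding saturated_def by blast
    qed
    fix e assume "e \<in> nonedges (mapg g H)"
    then obtain u v where uv: "e = {u,v}" "u \<in> g ` verts H" "v \<in> g ` verts H" "u \<noteq> v"
      "{u,v} \<notin> (\<lambda>e. g ` e) ` edges H" unfolding nonedges_def by auto
    then obtain p q where pq: "p \<in> verts H" "q \<in> verts H" "u = g p" "v = g q" by auto
    have "{p,q} \<in> nonedges H"
    proof -
      have "p \<noteq> q" using pq uv by blast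
      moreover have "{p,q} \<notin> edges H"
      proof
        assume "{p,q} \<in> edges H"
        then have "g ` {p,q} \<in> (\<lambda>e. g ` e) ` edges H" by (rule imageI)
        then show False using uv pq by simp
      qed
      ultimately show ?thesis using pq unfolding nonedges_def by auto
    qed
    then obtain \<phi> where \<phi>: "embedding \<phi> F (add_edge H {p,q})"
      using sat unfolding saturated_def contains_copy_def by blast
    have "embedding (g \<circ> \<phi>) F (add_edge (mapg g H) e)"
    proof (rule emb_map[OF \<phi>])
      show "inj_on g (verts (add_edge H {p, q}))" using inj by simp
      show "g ` verts (add_edge H {p, q}) \<subseteq> verts (add_edge (mapg g H) e)" by simp
      fix d assume "d \<in> edges (add_edge H {p, q})"
      then show "g ` d \<in> edges (add_edge (mapg g H) e)" using uv pq by auto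
    qed
    then show "contains_copy (add_edge (mapg g H) e) F" by (auto simp: contains_copy_def)
  qed
qed

lemma binom_step:
  fixes m k s :: nat
  assumes s1: "s \<ge> 1" and m1: "m \<ge> 1" and mk: "m \<le> s * k"
  shows "((m - 1) choose k) * s \<le> (m choose k) * (s - 1)"
proof -
  have ab: "(m - k) * (m choose k) = m * ((m - 1) choose k)" by (rule binomial_absorb_comp)
  have key: "(m - k) * s \<le> (s - 1) * m"
  proof (cases "m \<ge> k")
    case True
    have "(m - k) * s = m * s - k * s" by (simp add: diff_mult_distrib)
    moreover have "(s - 1) * m = s * m - m" by (simp add: diff_mult_distrib)
    moreover have "m \<le> s * m" using s1 by simp
    ultimately show ?thesis using mk by (simp add: mult.commute)
  next
    case False then show ?thesis by simp
  qed
  have "m * (((m - 1) choose k) * s) = (m - k) * s * (m choose k)" using ab by (simp add: ac_simps)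
  also have "\<dots> \<le> (s - 1) * m * (m choose k)" using key by (rule mult_right_mono) simp
  also have "\<dots> = m * ((m choose k) * (s - 1))" by (simp add: ac_simps)
  finally show ?thesis using m1 by simp
qed

lemma binom_ratio:
  fixes s k :: nat
  assumes s2: "s \<ge> 2" and k1: "k \<ge> 1"
  shows "j \<le> k \<Longrightarrow> ((s * k - 1 - j) choose k) * s ^ j \<le> ((s * k - 1) choose k) * (s - 1) ^ j"
proof (induction j)
  case 0 then show ?case by simp
next
  case (Suc j)
  define m where "m = s * k - 1 - j"
  have "s * k \<ge> 2 * k" using s2 by simp
  then have m1: "m \<ge> 1" using Suc.prems k1 unfolding m_def by linarith
  have mk: "m \<le> s * k" unfolding m_def by simp
  have eq: "s * k - 1 - Suc j = m - 1" unfolding m_def by simp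
  have "((s * k - 1 - Suc j) choose k) * s ^ Suc j = (((m - 1) choose k) * s) * s ^ j"
    unfolding eq by (simp add: ac_simps)
  also have "\<dots> \<le> ((m choose k) * (s - 1)) * s ^ j"
    using binom_step[OF _ m1 mk] s2 by (intro mult_right_mono) auto
  also have "\<dots> = ((m choose k) * s ^ j) * (s - 1)" by (simp add: ac_simps)
  also have "\<dots> \<le> (((s * k - 1) choose k) * (s - 1) ^ j) * (s - 1)"
    using Suc by (intro mult_right_mono) (auto simp: m_def)
  also have "\<dots> = ((s * k - 1) choose k) * (s - 1) ^ Suc j" by (simp add: ac_simps)
  finally show ?case .
qed

lemma witness:
  fixes s t k :: nat
  assumes s3: "s \<ge> 3" and t2: "t \<ge> 2" and k1: "k \<ge> 1"
  shows "rsat_defined (((s * k - 1) choose k) * t) (F'_t (complete_graph s) 0 1 t) \<and>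
         rsat (((s * k - 1) choose k) * t) (F'_t (complete_graph s) 0 1 t)
           \<le> (((s * k - 1) choose k) * t) * ((t - 1) + t * ((s * k - 1 - k) choose k))"
proof -
  define n where "n = s * k - 1"
  define N where "N = (n choose k) * t"
  define D where "D = (t - 1) + t * ((n - k) choose k)"
  define H where "H = blowup (kn n k) (complete_graph t)"
  have wfK: "wf_graph (kn n k)" by (rule kn_wf[OF k1])
  have satK: "saturated (complete_graph s) (kn n k)" using kn_sat[OF k1 _ n_def] s3 by simp
  have e01: "{0,1} \<in> edges (complete_graph s)" using s3 by (simp add: cg_edge)
  have satH: "saturated (F'_t (complete_graph s) 0 1 t) H" unfolding H_def
    by (rule sat_blow[OF cg_wf cg_et e01 _ satK cg_complete]) (use s3 t2 in auto)
  have regH: "regular H" unfolding H_def by (rule reg_bl[OF wfK kn_regular[OF k1]])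
  have wfH: "wf_graph H" unfolding H_def by (rule wf_blowup[OF wfK])
  have cK: "card (verts (kn n k)) = n choose k" unfolding kn_verts using n_subsets[of "{0..<n}" k] by simp
  have cV: "card (verts H) = N" unfolding H_def N_def by (simp add: card_cartesian_product cK)
  have degH: "degree H v \<le> D" if vH: "v \<in> verts H" for v
  proof -
    obtain u a where v: "v = (u,a)" "u \<in> verts (kn n k)" "a < t" using vH unfolding H_def bl_verts cg_verts by (cases v) auto
    have "degree H v = (t - 1) + t * degree (kn n k) u" unfolding H_def v(1)
      by (rule deg_bl[OF v(2,3) kn_fin])
    also have "\<dots> = D" unfolding D_def using kn_degree[OF k1 v(2)] by simp
    finally show ?thesis by simp
  qed
  have cE: "card (edges H) \<le> N * D" using edge_count[OF wfH degH] cV by simp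
  have finH: "finite (verts H)" using wfH by (simp add: wf_graph_def)
  obtain g where g: "bij_betw g (verts H) {0..<card (verts H)}" using ex_bij_betw_finite_nat[OF finH] by blast
  have inj: "inj_on g (verts H)" and img: "g ` verts H = {0..<N}" using g cV by (auto simp: bij_betw_def)
  have P: "verts (mapg g H) = {0..<N} \<and> regular (mapg g H) \<and> saturated (F'_t (complete_graph s) 0 1 t) (mapg g H)
     \<and> card (edges (mapg g H)) = card (edges (mapg g H))"
    using mapg_transfer[OF wfH inj] regH satH img by simp
  have def: "rsat_defined N (F'_t (complete_graph s) 0 1 t)" unfolding rsat_defined_def using P by blast
  have "rsat N (F'_t (complete_graph s) 0 1 t) \<le> card (edges (mapg g H))"
    unfolding rsat_def by (rule Least_le) (use P in blast)
  also have "\<dots> \<le> card (edges H)" by (rule mapg_transfer(4)[OF wfH inj])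
  also have "\<dots> \<le> N * D" by (rule cE)
  finally show ?thesis using def unfolding N_def D_def n_def by simp
qed

lemma ratio_bound:
  fixes s t k :: nat
  assumes s3: "s \<ge> 3" and t2: "t \<ge> 2" and k1: "k \<ge> 1"
  defines "N \<equiv> ((s * k - 1) choose k) * t"
  shows "rsat_defined N (F'_t (complete_graph s) 0 1 t)"
    "real (rsat N (F'_t (complete_graph s) 0 1 t)) / (real N)^2 \<le> 2 * ((real s - 1) / real s) ^ k"
    "k \<le> N"
proof -
  define n where "n = s * k - 1"
  define C where "C = n choose k"
  define d where "d = (n - k) choose k"
  define r where "r = rsat N (F'_t (complete_graph s) 0 1 t)"
  have w: "rsat_defined N (F'_t (complete_graph s) 0 1 t)" "r \<le> N * ((t - 1) + t * d)"
    using witness[OF s3 t2 k1] unfolding N_def r_def d_def n_def by auto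
  then show "rsat_defined N (F'_t (complete_graph s) 0 1 t)" by simp
  have "s * k \<ge> 3 * k" using s3 by simp
  then have nk: "n - k \<ge> k" "k \<le> n" using k1 unfolding n_def by linarith+
  have d1: "d \<ge> 1" unfolding d_def using nk(1) zero_less_binomial[of k "n - k"] by linarith
  have C1: "C \<ge> 1" unfolding C_def using nk(2) zero_less_binomial[of k n] by linarith
  have NC: "N = C * t" unfolding N_def C_def n_def by simp
  have Npos: "N > 0" using NC C1 t2 by simp
  have br: "d * s ^ k \<le> C * (s - 1) ^ k"
    using binom_ratio[of s k k] s3 k1 unfolding d_def C_def n_def by simp
  have "t * 1 \<le> t * d" by (rule mult_le_mono2[OF d1])
  moreover have "2 * t * d = t * d + t * d" by simp
  ultimately have Dle: "(t - 1) + t * d \<le> 2 * t * d" by linarith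
  have "N * ((t - 1) + t * d) \<le> N * (2 * t * d)" by (rule mult_le_mono2[OF Dle])
  then have "r \<le> N * (2 * t * d)" using w(2) by linarith
  then have "real r \<le> real (N * (2 * t * d))" by (simp only: of_nat_le_iff)
  then have "real r \<le> real N * real (2 * t * d)" by simp
  then have "real r / (real N)^2 \<le> real N * real (2 * t * d) / (real N)^2"
    by (intro divide_right_mono) auto
  also have "\<dots> = 2 * real d / real C" using Npos C1 t2 unfolding NC
    by (simp add: power2_eq_square field_simps)
  also have "\<dots> \<le> 2 * ((real s - 1) / real s) ^ k"
  proof -
    have "real (d * s ^ k) \<le> real (C * (s - 1) ^ k)" by (simp only: of_nat_le_iff) (rule br)
    moreover have "real (s - 1) = real s - 1" using s3 by simp
    ultimately have "real d * real s ^ k \<le> real C * (real s - 1) ^ k" by simp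
    then have "real d / real C \<le> (real s - 1) ^ k / real s ^ k"
      using C1 s3 by (simp add: divide_simps mult.commute)
    then show ?thesis by (simp add: power_divide)
  qed
  finally show "real (rsat N (F'_t (complete_graph s) 0 1 t)) / (real N)^2 \<le> 2 * ((real s - 1) / real s) ^ k"
    unfolding r_def .
  have "(real n / real k) ^ k \<le> real C" unfolding C_def by (rule binomial_ge_n_over_k_pow_k[OF nk(2)])
  moreover have "2 \<le> real n / real k" using nk k1 by (simp add: field_simps)
  moreover have "(2::real) ^ k \<le> (real n / real k) ^ k"
    by (rule power_mono[OF \<open>2 \<le> real n / real k\<close>]) simp
  ultimately have "2 ^ k \<le> real C" by linarith
  moreover have "k < 2 ^ k" by (rule less_exp)
  then have "real k < real (2 ^ k)" by (simp only: of_nat_less_iff)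
  then have "real k < 2 ^ k" by simp
  ultimately have "k \<le> C" by linarith
  moreover have "C * 1 \<le> C * t" using t2 by (intro mult_le_mono2) simp
  ultimately show "k \<le> N" unfolding NC by linarith
qed

lemma liminf_zero:
  fixes s t :: nat
  assumes s3: "s \<ge> 3" and t2: "t \<ge> 2"
  shows "Liminf (inf sequentially (principal {n. rsat_defined n (F'_t (complete_graph s) 0 1 t)}))
              (\<lambda>n. ereal (real (rsat n (F'_t (complete_graph s) 0 1 t)) / (real n)^2)) = 0"
    (is "Liminf ?F ?f = 0")
proof (rule antisym)
  show "0 \<le> Liminf ?F ?f" by (rule Liminf_bounded) (simp add: always_eventually)
  define q where "q = (real s - 1) / real s"
  have q0: "0 \<le> q" "q < 1" using s3 unfolding q_def by (auto simp: field_simps)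
  show "Liminf ?F ?f \<le> 0"
    unfolding Liminf_def
  proof (rule SUP_least)
    fix P assume "P \<in> {P. eventually P ?F}"
    then have "eventually (\<lambda>n. n \<in> {n. rsat_defined n (F'_t (complete_graph s) 0 1 t)} \<longrightarrow> P n) sequentially"
      by (simp add: eventually_inf_principal)
    then obtain M where M: "\<And>n. n \<ge> M \<Longrightarrow> rsat_defined n (F'_t (complete_graph s) 0 1 t) \<Longrightarrow> P n"
      by (auto simp: eventually_sequentially)
    show "(INF x\<in>{x. P x}. ?f x) \<le> 0"
    proof (rule ereal_le_epsilon2)
      fix e :: real assume e: "0 < e"
      obtain k0 where k0: "q ^ k0 < e / 2" using real_arch_pow_inv[of "e/2" q] e q0 by auto
      define k where "k = max k0 (max M 1)"
      have k1: "k \<ge> 1" "k \<ge> M" "k \<ge> k0" unfolding k_def by auto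
      have "q ^ k \<le> q ^ k0" by (rule power_decreasing[OF k1(3)]) (use q0 in auto)
      then have qk: "2 * q ^ k < e" using k0 by linarith
      define N where "N = ((s * k - 1) choose k) * t"
      have rb: "rsat_defined N (F'_t (complete_graph s) 0 1 t)"
        "real (rsat N (F'_t (complete_graph s) 0 1 t)) / (real N)^2 \<le> 2 * q ^ k" "k \<le> N"
        using ratio_bound[OF s3 t2 k1(1)] unfolding N_def q_def by auto
      have "P N" using M[OF _ rb(1)] rb(3) k1(2) by linarith
      then have "(INF x\<in>{x. P x}. ?f x) \<le> ?f N" by (intro INF_lower) simp
      also have "\<dots> \<le> ereal (2 * q ^ k)" using rb(2) by simp
      also have "\<dots> \<le> 0 + ereal e" using qk by simp
      finally show "(INF x\<in>{x. P x}. ?f x) \<le> 0 + ereal e" .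
    qed
  qed
qed

theorem theorem3p1:
  fixes F :: "'b graph" and G :: "'a graph" and x y :: 'b
  assumes "wf_graph F" and "edge_transitive F" and "{x, y} \<in> edges F" and "x \<noteq> y"
    and "regular G" and "saturated F G"
  shows "(\<forall>t\<ge>2. regular (blowup G (complete_graph t)) \<and>
                 oversaturated (F'_t F x y t) (blowup G (complete_graph t)))
       \<and> (is_complete F \<and> card (verts F) \<ge> 3 \<longrightarrow>
            (\<forall>t\<ge>2. saturated (F'_t F x y t) (blowup G (complete_graph t))))
       \<and> (\<forall>s t. s \<ge> 3 \<and> t \<ge> 2 \<longrightarrow>
            Liminf (inf sequentially (principal {n. rsat_defined n (F'_t (complete_graph s) 0 1 t)}))
              (\<lambda>n. ereal (real (rsat n (F'_t (complete_graph s) 0 1 t)) / (real n)^2)) = 0)"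
proof (intro conjI allI impI)
  have wfG: "wf_graph G" using assms(6) by (simp add: saturated_def)
  fix t :: nat assume "t \<ge> 2"
  show "regular (blowup G (complete_graph t))" by (rule reg_bl[OF wfG assms(5)])
  show "oversaturated (F'_t F x y t) (blowup G (complete_graph t))"
    by (rule oversat[OF assms(1-4) assms(6)])
next
  fix t :: nat assume h: "is_complete F \<and> card (verts F) \<ge> 3" "t \<ge> 2"
  show "saturated (F'_t F x y t) (blowup G (complete_graph t))"
    by (rule sat_blow[OF assms(1-4) assms(6)]) (use h in auto)
next
  fix s t :: nat assume "s \<ge> 3 \<and> t \<ge> 2"
  then show "Liminf (inf sequentially (principal {n. rsat_defined n (F'_t (complete_graph s) 0 1 t)}))
              (\<lambda>n. ereal (real (rsat n (F'_t (complete_graph s) 0 1 t)) / (real n)^2)) = 0"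
    using liminf_zero by blast
qed

end
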